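(* Let $p\geq1$, let $G$ be a discrete group with identity $e$, let $a\in G$, and let $\mu$ be a left Haar measure on $G$ with $\mu(\{e\})\geq1$. Let $(\gamma_n)_n$ be an unbounded sequence of non-negative integers and $w:G\to(0,\infty)$ a bounded function with $$c:=\inf_{n\in\mathbb{N}}\prod_{k=1}^{\gamma_n}w(a^k)>0.$$ Then the set $$\Gamma:=\big\{f\in L^p(G,\mu):\ |f(e)|\,c\geq1\big\}$$ is not $\sigma$-porous in $L^p(G,\mu)$. In particular, with $T_n:=T_{a,w,p}^{\gamma_n}$, the set of all non-hypercyclic vectors of the sequence $(T_n)_n$ is not $\sigma$-porous in $L^p(G,\mu)$.
   Context: For $a\in G$ and a bounded weight $w:G\to(0,\infty)$, the weighted translation operator $T_{a,w,p}:L^p(G,\mu)\to L^p(G,\mu)$ is $(T_{a,w,p}f)(x)=w(x)\,f(a^{-1}x)$. A sequence $(T_n)_n$ of bounded operators on a Banach space $\mathcal X$ is hypercyclic if some $x\in\mathcal X$ (a hypercyclic vector) has dense orbit $\{T_nx:n\in\mathbb N_0\}$; the non-hypercyclic vectors are the elements of $\mathcal X$ that are not hypercyclic vectors. Porosity: Let $X$ be a metric space and $0<\lambda<1$. A set $E\subseteq X$ is $\lambda$-porous at $x\in E$ if for each $\delta>0$ there is $y\in B(x;\delta)\setminus\{x\}$ with $B(y;\lambda\, d(x,y))\cap E=\varnothing$; $E$ is $\lambda$-porous if it is $\lambda$-porous at each of its points; $E$ is $\sigma$-$\lambda$-porous if it is a countable union of $\lambda$-porous subsets of $X$. A set is called $\sigma$-porous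 if it is $\sigma$-$\lambda$-porous for some $\lambda\in(0,1)$; "not $\sigma$-porous" means not $\sigma$-$\lambda$-porous for any $\lambda\in(0,1)$. *)

theory Defs
  imports "HOL-Analysis.Analysis"
begin

text \<open>Groups are written additively (class group_add, not assumed commutative):
  the identity e is 0, the product a x is a + x, the inverse a^-1 is -a.\<close>

fun gpow :: "nat \<Rightarrow> 'g::group_add \<Rightarrow> 'g" where
  "gpow 0 a = 0"
| "gpow (Suc k) a = a + gpow k a"

text \<open>Left Haar measure on G with the discrete topology: a measure on all subsets
  (the Borel sets of a discrete space), left invariant, finite on compact
  (= finite) sets, and nonzero.\<close>
definition discrete_left_Haar :: "'g::group_add measure \<Rightarrow> bool" where
  "discrete_left_Haar M \<longleftrightarrow>
     sets M = UNIV \<and>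
     (\<forall>b A. emeasure M ((\<lambda>x. b + x) ` A) = emeasure M A) \<and>
     (\<forall>A. finite A \<longrightarrow> emeasure M A < \<infinity>) \<and>
     emeasure M UNIV \<noteq> 0"

definition Lp :: "'g measure \<Rightarrow> real \<Rightarrow> ('g \<Rightarrow> complex) set" where
  "Lp M p = {f. f \<in> borel_measurable M \<and>
                (\<integral>\<^sup>+ x. ennreal (cmod (f x) powr p) \<partial>M) < \<infinity>}"

definition Lp_dist :: "'g measure \<Rightarrow> real \<Rightarrow> ('g \<Rightarrow> complex) \<Rightarrow> ('g \<Rightarrow> complex) \<Rightarrow> real" where
  "Lp_dist M p f g = enn2real (\<integral>\<^sup>+ x. ennreal (cmod (f x - g x) powr p) \<partial>M) powr (1 / p)"

definition wtrans :: "'g::group_add \<Rightarrow> ('g \<Rightarrow> real) \<Rightarrow> ('g \<Rightarrow> complex) \<Rightarrow> ('g \<Rightarrow> complex)" where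
  "wtrans a w f = (\<lambda>x. complex_of_real (w x) * f (- a + x))"

definition hypercyclic_vector :: "'x set \<Rightarrow> ('x \<Rightarrow> 'x \<Rightarrow> real) \<Rightarrow> (nat \<Rightarrow> 'x \<Rightarrow> 'x) \<Rightarrow> 'x \<Rightarrow> bool" where
  "hypercyclic_vector X d T f \<longleftrightarrow> f \<in> X \<and> (\<forall>g\<in>X. \<forall>\<epsilon>>0. \<exists>n. d (T n f) g < \<epsilon>)"

definition non_hypercyclic_vectors :: "'x set \<Rightarrow> ('x \<Rightarrow> 'x \<Rightarrow> real) \<Rightarrow> (nat \<Rightarrow> 'x \<Rightarrow> 'x) \<Rightarrow> 'x set" where
  "non_hypercyclic_vectors X d T = {f\<in>X. \<not> hypercyclic_vector X d T f}"

definition porous_at :: "'x set \<Rightarrow> ('x \<Rightarrow> 'x \<Rightarrow> real) \<Rightarrow> real \<Rightarrow> 'x set \<Rightarrow> 'x \<Rightarrow> bool" where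
  "porous_at X d lam E x \<longleftrightarrow>
     (\<forall>\<delta>>0. \<exists>y\<in>X. y \<noteq> x \<and> d x y < \<delta> \<and>
                 (\<forall>z\<in>X. d y z < lam * d x y \<longrightarrow> z \<notin> E))"

definition porous :: "'x set \<Rightarrow> ('x \<Rightarrow> 'x \<Rightarrow> real) \<Rightarrow> real \<Rightarrow> 'x set \<Rightarrow> bool" where
  "porous X d lam E \<longleftrightarrow> (\<forall>x\<in>E. porous_at X d lam E x)"

definition sigma_porous_lam :: "'x set \<Rightarrow> ('x \<Rightarrow> 'x \<Rightarrow> real) \<Rightarrow> real \<Rightarrow> 'x set \<Rightarrow> bool" where
  "sigma_porous_lam X d lam E \<longleftrightarrow>
     (\<exists>A :: nat \<Rightarrow> 'x set. (\<forall>n. A n \<subseteq> X \<and> porous X d lam (A n)) \<and> E = (\<Union>n. A n))"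

definition sigma_porous :: "'x set \<Rightarrow> ('x \<Rightarrow> 'x \<Rightarrow> real) \<Rightarrow> 'x set \<Rightarrow> bool" where
  "sigma_porous X d E \<longleftrightarrow> (\<exists>lam. 0 < lam \<and> lam < 1 \<and> sigma_porous_lam X d lam E)"

end

theory Submission
  imports Defs
begin


lemma porous_at_mono:
  assumes "porous_at X d lam B x" "C \<subseteq> B"
  shows "porous_at X d lam C x"
  unfolding porous_at_def
proof (intro allI impI)
  fix \<delta> :: real assume "\<delta> > 0"
  then obtain y where "y \<in> X" "y \<noteq> x" "d x y < \<delta>" "\<forall>z\<in>X. d y z < lam * d x y \<longrightarrow> z \<notin> B"
    using assms(1) unfolding porous_at_def by blast
  then show "\<exists>y\<in>X. y \<noteq> x \<and> d x y < \<delta> \<and> (\<forall>z\<in>X. d y z < lam * d x y \<longrightarrow> z \<notin> C)"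
    using assms(2) by blast
qed

lemma sigma_porous_subset:
  assumes "E \<subseteq> F" "sigma_porous X d F"
  shows "sigma_porous X d E"
proof -
  obtain lam where l: "0 < lam" "lam < 1" and sl: "sigma_porous_lam X d lam F"
    using assms(2) unfolding sigma_porous_def by auto
  obtain A :: "nat \<Rightarrow> _" where A: "\<forall>n. A n \<subseteq> X \<and> porous X d lam (A n)" "F = (\<Union>n. A n)"
    using sl unfolding sigma_porous_lam_def by (elim exE conjE) (rule that; assumption)
  have "\<forall>n. A n \<inter> E \<subseteq> X \<and> porous X d lam (A n \<inter> E)"
  proof
    fix n
    have "porous X d lam (A n \<inter> E)" unfolding porous_def
    proof
      fix x assume "x \<in> A n \<inter> E"
      then have "porous_at X d lam (A n) x" using A(1) unfolding porous_def by blast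
      then show "porous_at X d lam (A n \<inter> E) x" by (rule porous_at_mono) blast
    qed
    then show "A n \<inter> E \<subseteq> X \<and> porous X d lam (A n \<inter> E)" using A(1) by blast
  qed
  moreover have "E = (\<Union>n. A n \<inter> E)" using assms(1) A(2) by auto
  ultimately have "sigma_porous_lam X d lam E" unfolding sigma_porous_lam_def by (intro exI[of _ "\<lambda>n. A n \<inter> E"]) auto
  then show ?thesis using l unfolding sigma_porous_def by auto
qed

lemma baire_abstract:
  fixes d :: "'x \<Rightarrow> 'x \<Rightarrow> real"
  assumes tri: "\<And>x y z. x\<in>X \<Longrightarrow> y\<in>X \<Longrightarrow> z\<in>X \<Longrightarrow> d x z \<le> 4*(d x y + d y z)"
    and sym: "\<And>x y. d x y = d y x"
    and pos: "\<And>x y. x\<in>X \<Longrightarrow> y\<in>X \<Longrightarrow> x \<noteq> y \<Longrightarrow> d x y > 0"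
    and d0: "\<And>x. d x x = 0"
    and complete: "\<And>x r. (\<forall>n. x n \<in> X) \<Longrightarrow> (\<forall>n. r n > 0) \<Longrightarrow> r \<longlonglongrightarrow> 0
        \<Longrightarrow> (\<forall>n k. n \<le> k \<longrightarrow> d (x n) (x k) < r n) \<Longrightarrow> (\<exists>l\<in>X. \<forall>n. d (x n) l \<le> r n)"
    and xz: "xz \<in> X" and rz: "rz > 0" and ball: "\<And>u. u\<in>X \<Longrightarrow> d xz u < 2*rz \<Longrightarrow> u \<in> E"
  shows "\<not> sigma_porous X d E"
proof
  assume "sigma_porous X d E"
  then obtain lam where l: "0 < lam" "lam < 1" and sl: "sigma_porous_lam X d lam E"
    unfolding sigma_porous_def by auto
  obtain A :: "nat \<Rightarrow> 'x set" where A: "\<forall>n. A n \<subseteq> X \<and> porous X d lam (A n)" "E = (\<Union>n. A n)"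
    using sl unfolding sigma_porous_lam_def by (elim exE conjE) (rule that; assumption)
  have AX: "\<And>n. A n \<subseteq> X" and Ap: "\<And>n. porous X d lam (A n)" and EA: "E = (\<Union>n. A n)"
    using A by auto
  have step: "\<exists>ys. fst ys \<in> X \<and> 0 < snd ys \<and> snd ys \<le> r/2 \<and>
      (\<forall>u\<in>X. d (fst ys) u < 2* snd ys \<longrightarrow> u \<notin> A n) \<and>
      (\<forall>u\<in>X. d (fst ys) u < snd ys \<longrightarrow> d x u < r)" if x: "x \<in> X" and r: "r > 0" for n x r
  proof (cases "\<exists>z\<in>A n. d x z < r/8")
    case True
    then obtain z where z: "z \<in> A n" "d x z < r/8" by blast
    have zX: "z \<in> X" using z AX by blast
    have pz: "porous_at X d lam (A n) z" using Ap[of n, unfolded porous_def] z(1) by (rule bspec)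
    have r64: "r/64 > 0" using r by simp
    obtain y where y: "y \<in> X" "y \<noteq> z" "d z y < r/64"
        and hole: "\<forall>u\<in>X. d y u < lam * d z y \<longrightarrow> u \<notin> A n"
      using pz[unfolded porous_at_def, rule_format, OF r64] by (elim bexE conjE) (rule that; assumption)
    have dzy: "d z y > 0" using pos[OF zX y(1)] y(2) by auto
    define s where "s = min (lam * d z y / 2) (r/64)"
    have s: "0 < s" "s \<le> r/2" using dzy l r by (auto simp: s_def)
    show ?thesis
    proof (rule exI[of _ "(y,s)"], intro conjI ballI impI)
      fix u assume u: "u \<in> X" "d (fst (y, s)) u < 2 * snd (y, s)"
      have "2 * s \<le> lam * d z y" unfolding s_def by linarith
      then have "d y u < lam * d z y" using u(2) by simp
      then show "u \<notin> A n" using hole u(1) by blast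
    next
      fix u assume u: "u \<in> X" "d (fst (y, s)) u < snd (y, s)"
      have "d x u \<le> 4*(d x z + d z u)" using tri x zX u(1) by blast
      moreover have "d z u \<le> 4*(d z y + d y u)" using tri zX y(1) u(1) by blast
      moreover have "s \<le> r/64" by (simp add: s_def)
      ultimately show "d x u < r" using u z y by simp
    qed (use y s in auto)
  next
    case False
    show ?thesis
    proof (rule exI[of _ "(x,r/16)"], intro conjI ballI impI)
      fix u assume u: "u \<in> X" "d (fst (x, r/16)) u < 2 * snd (x, r/16)"
      then show "u \<notin> A n" using False by auto
    qed (use x r in auto)
  qed
  define F where "F n xr = (SOME ys. fst ys \<in> X \<and> 0 < snd ys \<and> snd ys \<le> snd xr/2 \<and>
      (\<forall>u\<in>X. d (fst ys) u < 2* snd ys \<longrightarrow> u \<notin> A n) \<and>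
      (\<forall>u\<in>X. d (fst ys) u < snd ys \<longrightarrow> d (fst xr) u < snd xr))" for n xr
  have F: "fst (F n xr) \<in> X \<and> 0 < snd (F n xr) \<and> snd (F n xr) \<le> snd xr/2 \<and>
      (\<forall>u\<in>X. d (fst (F n xr)) u < 2* snd (F n xr) \<longrightarrow> u \<notin> A n) \<and>
      (\<forall>u\<in>X. d (fst (F n xr)) u < snd (F n xr) \<longrightarrow> d (fst xr) u < snd xr)"
    if "fst xr \<in> X" "snd xr > 0" for n xr
    unfolding F_def by (rule someI_ex, rule step, fact, fact)
  define S where "S = rec_nat (xz, rz) F"
  have S0: "S 0 = (xz, rz)" and SS: "S (Suc n) = F n (S n)" for n by (simp_all add: S_def)
  define xs where "xs n = fst (S n)" for n
  define rs where "rs n = snd (S n)" for n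
  have inv: "xs n \<in> X \<and> rs n > 0 \<and> rs n \<le> rz / 2^n" for n
  proof (induction n)
    case 0 then show ?case using xz rz by (simp add: xs_def rs_def S0)
  next
    case (Suc n)
    then have "fst (S n) \<in> X" "snd (S n) > 0" by (auto simp: xs_def rs_def)
    from F[OF this, of n] Suc show ?case by (auto simp: xs_def rs_def SS)
  qed
  have hole: "\<forall>u\<in>X. d (xs (Suc n)) u < 2*rs (Suc n) \<longrightarrow> u \<notin> A n"
    and nest: "\<forall>u\<in>X. d (xs (Suc n)) u < rs (Suc n) \<longrightarrow> d (xs n) u < rs n" for n
    using F[of "S n" n] inv[of n] by (auto simp: xs_def rs_def SS)
  have nest2: "\<forall>u\<in>X. d (xs (n+k)) u < rs (n+k) \<longrightarrow> d (xs n) u < rs n" for n k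
  proof (induction k)
    case 0 then show ?case by simp
  next
    case (Suc k) then show ?case using nest[of "n+k"] by simp
  qed
  have cauchy: "\<forall>n k. n \<le> k \<longrightarrow> d (xs n) (xs k) < rs n"
  proof (intro allI impI)
    fix n k :: nat assume "n \<le> k"
    then obtain j where "k = n + j" using le_Suc_ex by blast
    then show "d (xs n) (xs k) < rs n" using nest2[of n j] inv[of k] d0[of "xs k"] by auto
  qed
  have lim: "rs \<longlonglongrightarrow> 0"
  proof (rule real_tendsto_sandwich[of "\<lambda>n. 0" _ _ "\<lambda>n. rz / 2^n"])
    show "\<forall>\<^sub>F n in sequentially. 0 \<le> rs n" using inv by (simp add: less_imp_le)
    show "\<forall>\<^sub>F n in sequentially. rs n \<le> rz / 2^n" using inv by simp
    show "(\<lambda>n. rz / 2 ^ n) \<longlonglongrightarrow> 0"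
      by (intro LIMSEQ_divide_realpow_zero) auto
  qed simp
  have "\<forall>n. xs n \<in> X" "\<forall>n. rs n > 0" using inv by auto
  from complete[OF this lim cauchy] obtain l where lX: "l \<in> X" and ld: "\<And>n. d (xs n) l \<le> rs n"
    by auto
  have "l \<in> E" using ball[OF lX] ld[of 0] inv[of 0] by (simp add: xs_def rs_def S0)
  then obtain n where "l \<in> A n" using EA by blast
  moreover have "d (xs (Suc n)) l < 2 * rs (Suc n)" using ld[of "Suc n"] inv[of "Suc n"] by simp
  ultimately show False using hole[of n] lX by blast
qed



lemma space_UNIV: "sets M = UNIV \<Longrightarrow> space M = UNIV"
  using sets.sets_into_space[of UNIV M] by auto

lemma meas_all: assumes "sets M = UNIV" shows "f \<in> borel_measurable M"
proof -
  have e: "sets M = sets (count_space UNIV)" using assms by simp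
  show ?thesis by (subst measurable_cong_sets[OF e refl]) simp
qed

lemma haar_single:
  assumes haar: "discrete_left_Haar M"
  shows "emeasure M {t} = emeasure M {0}"
proof -
  have "emeasure M ((\<lambda>x. t + x) ` {0}) = emeasure M {0}" using haar unfolding discrete_left_Haar_def by blast
  then show ?thesis by simp
qed

lemma point_le:
  assumes haar: "discrete_left_Haar M" and e1: "emeasure M {0} \<ge> 1"
  shows "ennreal (cmod (h t) powr p) \<le> (\<integral>\<^sup>+ x. ennreal (cmod (h x) powr p) \<partial>M)"
proof -
  have sM: "sets M = UNIV" using haar unfolding discrete_left_Haar_def by blast
  have "ennreal (cmod (h t) powr p) = ennreal (cmod (h t) powr p) * 1" by simp
  also have "\<dots> \<le> ennreal (cmod (h t) powr p) * emeasure M {t}"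
    using e1 haar_single[OF haar, of t] by (intro mult_left_mono) auto
  also have "\<dots> = (\<integral>\<^sup>+ x. ennreal (cmod (h t) powr p) * indicator {t} x \<partial>M)"
    using sM by (subst nn_integral_cmult_indicator) auto
  also have "\<dots> \<le> (\<integral>\<^sup>+ x. ennreal (cmod (h x) powr p) \<partial>M)"
    by (intro nn_integral_mono) (auto split: split_indicator)
  finally show ?thesis .
qed

lemma dist_ge:
  assumes haar: "discrete_left_Haar M" and e1: "emeasure M {0} \<ge> 1" and p: "p \<ge> 1"
    and fin: "(\<integral>\<^sup>+ x. ennreal (cmod (f x - g x) powr p) \<partial>M) < \<infinity>"
  shows "cmod (f t - g t) \<le> Lp_dist M p f g"
proof -
  define N where "N = (\<integral>\<^sup>+ x. ennreal (cmod (f x - g x) powr p) \<partial>M)"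
  have "ennreal (cmod (f t - g t) powr p) \<le> N"
    unfolding N_def using point_le[OF haar e1, of "\<lambda>x. f x - g x"] by simp
  moreover have "N = ennreal (enn2real N)" using fin unfolding N_def
    by (simp add: ennreal_enn2real_if less_top)
  ultimately have le: "cmod (f t - g t) powr p \<le> enn2real N"
    by (metis enn2real_nonneg ennreal_le_iff)
  have "cmod (f t - g t) = (cmod (f t - g t) powr p) powr (1/p)"
    using p by (simp add: powr_powr)
  also have "\<dots> \<le> enn2real N powr (1/p)" using le p by (intro powr_mono2) auto
  finally show ?thesis unfolding Lp_dist_def N_def .
qed

lemma pw_ineq:
  fixes u v :: complex assumes p: "p \<ge> 0"
  shows "cmod (u - v) powr p \<le> 2 powr p * (cmod u powr p + cmod v powr p)"
proof -
  have "cmod (u - v) \<le> 2 * max (cmod u) (cmod v)"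
    using norm_triangle_ineq4[of u v] by linarith
  then have "cmod (u - v) powr p \<le> (2 * max (cmod u) (cmod v)) powr p"
    using p by (intro powr_mono2) auto
  also have "\<dots> = 2 powr p * max (cmod u) (cmod v) powr p" by (simp add: powr_mult)
  also have "max (cmod u) (cmod v) powr p \<le> cmod u powr p + cmod v powr p"
    by (cases "cmod u \<le> cmod v") (auto simp: max_def)
  finally show ?thesis by (simp add: mult_left_mono)
qed

lemma int_le:
  assumes sM: "sets M = UNIV" and p: "p \<ge> 0"
  shows "(\<integral>\<^sup>+ x. ennreal (cmod (u x - v x) powr p) \<partial>M) \<le>
    ennreal (2 powr p) * ((\<integral>\<^sup>+ x. ennreal (cmod (u x) powr p) \<partial>M) + (\<integral>\<^sup>+ x. ennreal (cmod (v x) powr p) \<partial>M))"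
proof -
  have "(\<integral>\<^sup>+ x. ennreal (cmod (u x - v x) powr p) \<partial>M) \<le>
     (\<integral>\<^sup>+ x. ennreal (2 powr p) * (ennreal (cmod (u x) powr p) + ennreal (cmod (v x) powr p)) \<partial>M)"
    using pw_ineq[OF p] by (intro nn_integral_mono) (simp add: ennreal_mult[symmetric] ennreal_plus[symmetric] del: ennreal_plus)
  also have "\<dots> = ennreal (2 powr p) * ((\<integral>\<^sup>+ x. ennreal (cmod (u x) powr p) \<partial>M) + (\<integral>\<^sup>+ x. ennreal (cmod (v x) powr p) \<partial>M))"
    by (subst nn_integral_cmult, simp add: meas_all[OF sM], subst nn_integral_add) (auto simp: meas_all[OF sM])
  finally show ?thesis .
qed

lemma fin_diff:
  assumes haar: "discrete_left_Haar M" and p: "p \<ge> 1" and f: "f \<in> Lp M p" and g: "g \<in> Lp M p"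
  shows "(\<integral>\<^sup>+ x. ennreal (cmod (f x - g x) powr p) \<partial>M) < \<infinity>"
proof -
  have sM: "sets M = UNIV" using haar unfolding discrete_left_Haar_def by blast
  show ?thesis using int_le[OF sM, of p f g] f g p unfolding Lp_def
    by (simp add: ennreal_mult_less_top order_le_less_trans)
qed

lemma real_quasi:
  fixes R1 R2 R3 p :: real
  assumes "R1 \<ge> 0" "R2 \<ge> 0" "R3 \<ge> 0" "p \<ge> 1" "R3 \<le> 2 powr p * (R1 + R2)"
  shows "R3 powr (1/p) \<le> 4 * (R1 powr (1/p) + R2 powr (1/p))"
proof -
  define q where "q = 1/p"
  have q: "q > 0" "q \<le> 1" using assms by (auto simp: q_def)
  have a: "R3 powr q \<le> (2 powr p * (R1 + R2)) powr q" using assms q by (intro powr_mono2) auto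
  have b: "(2 powr p * (R1 + R2)) powr q = 2 * (R1 + R2) powr q" using assms by (simp add: powr_mult powr_powr q_def)
  have c: "(R1 + R2) powr q \<le> (2 * max R1 R2) powr q" using assms q by (intro powr_mono2) auto
  have d: "(2 * max R1 R2) powr q = 2 powr q * max R1 R2 powr q" by (simp add: powr_mult)
  have e: "2 powr q \<le> 2" using q powr_mono[of q 1 2] by simp
  have f: "max R1 R2 powr q \<le> R1 powr q + R2 powr q"
    by (cases "R1 \<le> R2") (auto simp: max_def)
  have g: "2 powr q * max R1 R2 powr q \<le> 2 * (R1 powr q + R2 powr q)"
    using e f by (intro mult_mono) auto
  from a b c d g have "R3 powr q \<le> 2 * (2 * (R1 powr q + R2 powr q))" by linarith
  then show ?thesis unfolding q_def by simp
qed



lemma d_sym: "Lp_dist M p f g = Lp_dist M p g f"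
  unfolding Lp_dist_def by (simp add: norm_minus_commute)

lemma d_self: "p > 0 \<Longrightarrow> Lp_dist M p f f = 0"
  unfolding Lp_dist_def by simp

lemma d_pos:
  assumes haar: "discrete_left_Haar M" and e1: "emeasure M {0} \<ge> 1" and p: "p \<ge> 1"
    and f: "f \<in> Lp M p" and g: "g \<in> Lp M p" and ne: "f \<noteq> g"
  shows "Lp_dist M p f g > 0"
proof -
  obtain t where t: "f t \<noteq> g t" using ne by (meson ext)
  have "0 < cmod (f t - g t)" using t by simp
  also have "\<dots> \<le> Lp_dist M p f g" by (rule dist_ge[OF haar e1 p fin_diff[OF haar p f g]])
  finally show ?thesis .
qed

lemma d_tri:
  assumes haar: "discrete_left_Haar M" and p: "p \<ge> 1"
    and f: "f \<in> Lp M p" and g: "g \<in> Lp M p" and h: "h \<in> Lp M p"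
  shows "Lp_dist M p f h \<le> 4 * (Lp_dist M p f g + Lp_dist M p g h)"
proof -
  have sM: "sets M = UNIV" using haar unfolding discrete_left_Haar_def by blast
  define N1 where "N1 = (\<integral>\<^sup>+ x. ennreal (cmod (f x - g x) powr p) \<partial>M)"
  define N2 where "N2 = (\<integral>\<^sup>+ x. ennreal (cmod (g x - h x) powr p) \<partial>M)"
  define N3 where "N3 = (\<integral>\<^sup>+ x. ennreal (cmod (f x - h x) powr p) \<partial>M)"
  have fin: "N1 < \<infinity>" "N2 < \<infinity>" "N3 < \<infinity>" unfolding N1_def N2_def N3_def
    using fin_diff[OF haar p] f g h by auto
  have N2': "N2 = (\<integral>\<^sup>+ x. ennreal (cmod (h x - g x) powr p) \<partial>M)"
    unfolding N2_def by (simp add: norm_minus_commute)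
  have "N3 \<le> ennreal (2 powr p) * (N1 + N2)"
    using int_le[OF sM, of p "\<lambda>x. f x - g x" "\<lambda>x. h x - g x"] p unfolding N3_def N1_def N2' by simp
  also have "\<dots> = ennreal (2 powr p * (enn2real N1 + enn2real N2))"
    using fin by (simp add: ennreal_mult)
  finally have "enn2real N3 \<le> enn2real (ennreal (2 powr p * (enn2real N1 + enn2real N2)))"
    by (intro enn2real_mono) auto
  moreover have "0 \<le> 2 powr p * (enn2real N1 + enn2real N2)" by simp
  ultimately have le: "enn2real N3 \<le> 2 powr p * (enn2real N1 + enn2real N2)" by simp
  show ?thesis unfolding Lp_dist_def N1_def[symmetric] N2_def[symmetric] N3_def[symmetric]
    by (rule real_quasi[OF _ _ _ p le]) auto
qed

lemma tri3: "cmod (a - b) \<le> cmod (c - a) + cmod (c - b)" for a b c :: complex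
proof -
  have "a - b = (c - b) - (c - a)" by simp
  then show ?thesis using norm_triangle_ineq4[of "c - b" "c - a"] by simp
qed

lemma powr_inv_le:
  fixes R s p :: real assumes "R \<ge> 0" "p > 0" "R powr (1/p) < s"
  shows "R \<le> s powr p"
proof -
  have "R = (R powr (1/p)) powr p" using assms by (simp add: powr_powr)
  also have "\<dots> \<le> s powr p" using assms by (intro powr_mono2) auto
  finally show ?thesis .
qed

lemma complete_Lp:
  assumes haar: "discrete_left_Haar M" and e1: "emeasure M {0} \<ge> 1" and p: "p \<ge> 1"
    and x: "\<forall>n. x n \<in> Lp M p" and r: "\<forall>n. r n > 0" and lim: "r \<longlonglongrightarrow> 0"
    and c: "\<forall>n k. n \<le> k \<longrightarrow> Lp_dist M p (x n) (x k) < r n"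
  shows "\<exists>l\<in>Lp M p. \<forall>n. Lp_dist M p (x n) l \<le> r n"
proof -
  have sM: "sets M = UNIV" using haar unfolding discrete_left_Haar_def by blast
  have pw: "cmod (x n t - x k t) < r n" if "n \<le> k" for n k t
    using dist_ge[OF haar e1 p fin_diff[OF haar p x[rule_format, of n] x[rule_format, of k]], of t]
      c that by fastforce
  have conv: "convergent (\<lambda>k. x k t)" for t
  proof -
    have "Cauchy (\<lambda>k. x k t)"
    proof (rule CauchyI)
      fix e :: real assume e: "e > 0"
      have "eventually (\<lambda>n. r n < e/2) sequentially" using lim e by (intro order_tendstoD(2)) auto
      then obtain N where N: "r N < e/2" by (auto simp: eventually_sequentially)
      show "\<exists>M. \<forall>m\<ge>M. \<forall>n\<ge>M. cmod (x m t - x n t) < e"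
      proof (intro exI allI impI)
        fix m n assume "N \<le> m" "N \<le> n"
        then have "cmod (x N t - x m t) < r N" "cmod (x N t - x n t) < r N" using pw by auto
        then show "cmod (x m t - x n t) < e" using tri3[of "x m t" "x n t" "x N t"] N by linarith
      qed
    qed
    then show ?thesis by (simp add: Cauchy_convergent_iff)
  qed
  define l where "l t = lim (\<lambda>k. x k t)" for t
  have tl: "(\<lambda>k. x k t) \<longlonglongrightarrow> l t" for t using conv[of t] unfolding l_def convergent_LIMSEQ_iff .
  have ptl: "cmod (x n t - l t) \<le> r n" for n t
  proof (rule LIMSEQ_le_const2)
    show "(\<lambda>k. cmod (x n t - x k t)) \<longlonglongrightarrow> cmod (x n t - l t)" by (intro tendsto_intros tl)
    show "\<exists>N. \<forall>k\<ge>N. cmod (x n t - x k t) \<le> r n" using pw by (intro exI[of _ n]) (auto intro: less_imp_le)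
  qed
  have Nb: "(\<integral>\<^sup>+ t. ennreal (cmod (x n t - l t) powr p) \<partial>M) \<le> ennreal (r n powr p)" for n
  proof -
    define u where "u k t = ennreal (cmod (x n t - x k t) powr p)" for k t
    have limu: "(\<lambda>k. u k t) \<longlonglongrightarrow> ennreal (cmod (x n t - l t) powr p)" for t
      unfolding u_def using p by (intro tendsto_ennrealI tendsto_powr' tendsto_intros tl) auto
    have "(\<integral>\<^sup>+ t. ennreal (cmod (x n t - l t) powr p) \<partial>M) = (\<integral>\<^sup>+ t. liminf (\<lambda>k. u k t) \<partial>M)"
      by (intro nn_integral_cong) (simp add: lim_imp_Liminf[OF trivial_limit_sequentially limu])
    also have "\<dots> \<le> liminf (\<lambda>k. integral\<^sup>N M (u k))"
      by (intro nn_integral_liminf) (simp add: meas_all[OF sM])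
    also have "\<dots> \<le> limsup (\<lambda>k. integral\<^sup>N M (u k))" by (intro Liminf_le_Limsup) simp
    also have "\<dots> \<le> ennreal (r n powr p)"
    proof (rule Limsup_bounded)
      show "eventually (\<lambda>k. integral\<^sup>N M (u k) \<le> ennreal (r n powr p)) sequentially"
        unfolding eventually_sequentially
      proof (intro exI allI impI)
        fix k assume k: "n \<le> k"
        have fin: "integral\<^sup>N M (u k) < \<infinity>" unfolding u_def
          using fin_diff[OF haar p x[rule_format, of n] x[rule_format, of k]] .
        have "enn2real (integral\<^sup>N M (u k)) powr (1/p) < r n"
          using c k unfolding Lp_dist_def u_def by auto
        then have "enn2real (integral\<^sup>N M (u k)) \<le> r n powr p"
          using p by (intro powr_inv_le) auto
        then have hh: "ennreal (enn2real (integral\<^sup>N M (u k))) \<le> ennreal (r n powr p)" by (rule ennreal_leI)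
        have eq: "ennreal (enn2real (integral\<^sup>N M (u k))) = integral\<^sup>N M (u k)" using fin by simp
        show "integral\<^sup>N M (u k) \<le> ennreal (r n powr p)"
          using hh unfolding eq .
      qed
    qed
    finally show ?thesis .
  qed
  have lLp: "l \<in> Lp M p"
  proof -
    have "(\<integral>\<^sup>+ t. ennreal (cmod (l t) powr p) \<partial>M) =
        (\<integral>\<^sup>+ t. ennreal (cmod (x 0 t - (x 0 t - l t)) powr p) \<partial>M)" by simp
    also have "\<dots> \<le> ennreal (2 powr p) * ((\<integral>\<^sup>+ t. ennreal (cmod (x 0 t) powr p) \<partial>M)
        + (\<integral>\<^sup>+ t. ennreal (cmod (x 0 t - l t) powr p) \<partial>M))"
      using p by (intro int_le[OF sM]) auto
    also have "\<dots> < \<infinity>"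
      using x[rule_format, of 0] Nb[of 0] unfolding Lp_def
      by (simp add: ennreal_mult_less_top order_le_less_trans)
    finally show ?thesis unfolding Lp_def using meas_all[OF sM] by auto
  qed
  have "Lp_dist M p (x n) l \<le> r n" for n
  proof -
    have "enn2real (\<integral>\<^sup>+ t. ennreal (cmod (x n t - l t) powr p) \<partial>M) \<le> enn2real (ennreal (r n powr p))"
      using Nb[of n] by (intro enn2real_mono) auto
    then have "enn2real (\<integral>\<^sup>+ t. ennreal (cmod (x n t - l t) powr p) \<partial>M) \<le> r n powr p" by simp
    then have "Lp_dist M p (x n) l \<le> (r n powr p) powr (1/p)"
      unfolding Lp_dist_def using p by (intro powr_mono2) auto
    also have "\<dots> = r n" using p r by (simp add: powr_powr less_imp_le)
    finally show ?thesis .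
  qed
  then show ?thesis using lLp by blast
qed



lemma meas_gen: assumes "sets M = UNIV" "space N = UNIV" shows "f \<in> measurable M N"
proof -
  have e: "sets M = sets (count_space UNIV)" using assms by simp
  show ?thesis by (subst measurable_cong_sets[OF e refl]) (simp add: assms)
qed

lemma transl:
  fixes g :: "'g::group_add \<Rightarrow> ennreal"
  assumes haar: "discrete_left_Haar M"
  shows "(\<integral>\<^sup>+ x. g (-a + x) \<partial>M) = (\<integral>\<^sup>+ x. g x \<partial>M)"
proof -
  have sM: "sets M = UNIV" using haar unfolding discrete_left_Haar_def by blast
  have spM: "space M = UNIV" using space_UNIV[OF sM] .
  have hm: "(\<lambda>x. -a + x) \<in> measurable M M" by (rule meas_gen[OF sM spM])
  have D: "distr M M (\<lambda>x. -a + x) = M"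
  proof (rule measure_eqI)
    show "sets (distr M M (\<lambda>x. -a + x)) = sets M" by simp
  next
    fix A assume "A \<in> sets (distr M M (\<lambda>x. -a + x))"
    have im: "(\<lambda>x. -a + x) -` A \<inter> space M = (\<lambda>x. a + x) ` A"
    proof (intro set_eqI iffI)
      fix x assume "x \<in> (\<lambda>x. -a + x) -` A \<inter> space M"
      then have "-a + x \<in> A" by simp
      moreover have "x = a + (-a + x)" by (simp add: add.assoc[symmetric])
      ultimately show "x \<in> (\<lambda>x. a + x) ` A" by blast
    next
      fix x assume "x \<in> (\<lambda>x. a + x) ` A"
      then obtain y where "y \<in> A" "x = a + y" by blast
      then show "x \<in> (\<lambda>x. -a + x) -` A \<inter> space M" by (simp add: spM add.assoc[symmetric])
    qed
    have "emeasure (distr M M (\<lambda>x. -a + x)) A = emeasure M ((\<lambda>x. -a + x) -` A \<inter> space M)"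
      using sM by (intro emeasure_distr[OF hm]) auto
    also have "\<dots> = emeasure M A" unfolding im using haar unfolding discrete_left_Haar_def by blast
    finally show "emeasure (distr M M (\<lambda>x. -a + x)) A = emeasure M A" .
  qed
  have "(\<integral>\<^sup>+ x. g (-a + x) \<partial>M) = integral\<^sup>N (distr M M (\<lambda>x. -a + x)) g"
    by (rule nn_integral_distr[OF hm, symmetric]) (simp add: meas_all sM)
  then show ?thesis unfolding D .
qed

lemma wtrans_Lp:
  assumes haar: "discrete_left_Haar M" and p: "p \<ge> 1"
    and wpos: "\<And>x. w x > 0" and W: "\<And>x. w x \<le> W" and f: "f \<in> Lp M p"
  shows "wtrans a w f \<in> Lp M p"
proof -
  have sM: "sets M = UNIV" using haar unfolding discrete_left_Haar_def by blast
  have W0: "W \<ge> 0" using wpos[of 0] W[of 0] by linarith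
  have pt: "cmod (wtrans a w f x) powr p \<le> W powr p * cmod (f (-a + x)) powr p" for x
  proof -
    have "cmod (wtrans a w f x) = w x * cmod (f (-a + x))"
      unfolding wtrans_def using wpos[of x] by (simp add: norm_mult)
    also have "\<dots> \<le> W * cmod (f (-a + x))" using W[of x] by (simp add: mult_right_mono)
    finally have "cmod (wtrans a w f x) powr p \<le> (W * cmod (f (-a + x))) powr p"
      using p by (intro powr_mono2) auto
    also have "\<dots> = W powr p * cmod (f (-a + x)) powr p" using W0 by (simp add: powr_mult)
    finally show ?thesis .
  qed
  have "(\<integral>\<^sup>+ x. ennreal (cmod (wtrans a w f x) powr p) \<partial>M) \<le>
      (\<integral>\<^sup>+ x. ennreal (W powr p) * ennreal (cmod (f (-a + x)) powr p) \<partial>M)"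
    using pt by (intro nn_integral_mono) (simp add: ennreal_mult[symmetric])
  also have "\<dots> = ennreal (W powr p) * (\<integral>\<^sup>+ x. ennreal (cmod (f (-a + x)) powr p) \<partial>M)"
    by (rule nn_integral_cmult) (simp add: meas_all sM)
  also have "\<dots> = ennreal (W powr p) * (\<integral>\<^sup>+ x. ennreal (cmod (f x) powr p) \<partial>M)"
    using transl[OF haar, of "\<lambda>y. ennreal (cmod (f y) powr p)" a] by simp
  also have "\<dots> < \<infinity>" using f unfolding Lp_def by (simp add: ennreal_mult_less_top)
  finally show ?thesis unfolding Lp_def using meas_all[OF sM] by auto
qed

lemma iter_val:
  "(wtrans a w ^^ n) f (gpow n a) = complex_of_real (\<Prod>k\<in>{1..n}. w (gpow k a)) * f 0"
proof (induction n)
  case 0 then show ?case by simp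
next
  case (Suc n)
  have "(wtrans a w ^^ Suc n) f (gpow (Suc n) a) =
     complex_of_real (w (gpow (Suc n) a)) * (wtrans a w ^^ n) f (gpow n a)"
    by (simp add: wtrans_def add.assoc[symmetric])
  also have "\<dots> = complex_of_real (w (gpow (Suc n) a) * (\<Prod>k\<in>{1..n}. w (gpow k a))) * f 0"
    using Suc by simp
  also have "w (gpow (Suc n) a) * (\<Prod>k\<in>{1..n}. w (gpow k a)) = (\<Prod>k\<in>{1..Suc n}. w (gpow k a))"
    by (simp add: prod.nat_ivl_Suc')
  finally show ?case .
qed

lemma iter_Lp:
  assumes haar: "discrete_left_Haar M" and p: "p \<ge> 1"
    and wpos: "\<And>x. w x > 0" and W: "\<And>x. w x \<le> W" and f: "f \<in> Lp M p"
  shows "(wtrans a w ^^ n) f \<in> Lp M p"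
  by (induction n) (auto intro: wtrans_Lp[OF haar p wpos W] f)


theorem mainTheorem8:
  fixes p :: real and M :: "'g::group_add measure" and a :: 'g
    and \<gamma> :: "nat \<Rightarrow> nat" and w :: "'g \<Rightarrow> real" and c :: real
  assumes p: "p \<ge> 1"
    and haar: "discrete_left_Haar M"
    and e1: "emeasure M {0} \<ge> 1"
    and unb: "\<not> bdd_above (range \<gamma>)"
    and wpos: "\<And>x. w x > 0"
    and wbdd: "bdd_above (range w)"
    and c_def: "c = (INF n. \<Prod>k\<in>{1..\<gamma> n}. w (gpow k a))"
    and cpos: "c > 0"
  shows "\<not> sigma_porous (Lp M p) (Lp_dist M p) {f \<in> Lp M p. cmod (f 0) * c \<ge> 1}
       \<and> \<not> sigma_porous (Lp M p) (Lp_dist M p)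
             (non_hypercyclic_vectors (Lp M p) (Lp_dist M p) (\<lambda>n. wtrans a w ^^ \<gamma> n))"
proof -
  have p0: "p > 0" using p by simp
  have sM: "sets M = UNIV" using haar unfolding discrete_left_Haar_def by blast
  have fin0: "emeasure M {0} < \<infinity>" using haar unfolding discrete_left_Haar_def by blast
  define E where "E = {f \<in> Lp M p. cmod (f 0) * c \<ge> 1}"
  define f0 :: "'g \<Rightarrow> complex" where "f0 x = (if x = 0 then complex_of_real (2/c) else 0)" for x
  have f0Lp: "f0 \<in> Lp M p"
  proof -
    have "(\<integral>\<^sup>+ x. ennreal (cmod (f0 x) powr p) \<partial>M) = (\<integral>\<^sup>+ x. ennreal ((2/c) powr p) * indicator {0} x \<partial>M)"
      using cpos p0 by (intro nn_integral_cong) (auto simp: f0_def norm_divide split: split_indicator)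
    also have "\<dots> = ennreal ((2/c) powr p) * emeasure M {0}"
      using sM by (intro nn_integral_cmult_indicator) auto
    also have "\<dots> < \<infinity>" using fin0 by (simp add: ennreal_mult_less_top)
    finally show ?thesis unfolding Lp_def using meas_all[OF sM] by auto
  qed
  have notE: "\<not> sigma_porous (Lp M p) (Lp_dist M p) E"
  proof (rule baire_abstract[where xz = f0 and rz = "1/(2*c)"])
    show "\<And>x y z. x \<in> Lp M p \<Longrightarrow> y \<in> Lp M p \<Longrightarrow> z \<in> Lp M p \<Longrightarrow>
        Lp_dist M p x z \<le> 4 * (Lp_dist M p x y + Lp_dist M p y z)"
      by (rule d_tri[OF haar p])
    show "\<And>x y. Lp_dist M p x y = Lp_dist M p y x" by (rule d_sym)
    show "\<And>x y. x \<in> Lp M p \<Longrightarrow> y \<in> Lp M p \<Longrightarrow> x \<noteq> y \<Longrightarrow> 0 < Lp_dist M p x y"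
      by (rule d_pos[OF haar e1 p])
    show "\<And>x. Lp_dist M p x x = 0" by (rule d_self[OF p0])
    show "\<And>x r. \<forall>n. x n \<in> Lp M p \<Longrightarrow> \<forall>n. 0 < r n \<Longrightarrow> r \<longlonglongrightarrow> 0 \<Longrightarrow>
        \<forall>n k. n \<le> k \<longrightarrow> Lp_dist M p (x n) (x k) < r n \<Longrightarrow> \<exists>l\<in>Lp M p. \<forall>n. Lp_dist M p (x n) l \<le> r n"
      by (rule complete_Lp[OF haar e1 p])
    show "f0 \<in> Lp M p" by (rule f0Lp)
    show "0 < 1 / (2 * c)" using cpos by simp
  next
    fix u assume u: "u \<in> Lp M p" and du: "Lp_dist M p f0 u < 2 * (1 / (2 * c))"
    have "cmod (f0 0 - u 0) \<le> Lp_dist M p f0 u"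
      by (rule dist_ge[OF haar e1 p fin_diff[OF haar p f0Lp u]])
    also have "\<dots> < 1/c" using du by simp
    finally have a1: "cmod (f0 0 - u 0) < 1/c" .
    have "cmod (f0 0) = 2/c" using cpos by (simp add: f0_def norm_divide)
    moreover have "cmod (f0 0) - cmod (u 0) \<le> cmod (f0 0 - u 0)" by (rule norm_triangle_ineq2)
    ultimately have "cmod (u 0) > 1/c" using a1 by simp
    then have "cmod (u 0) * c > (1/c) * c" using cpos by (intro mult_strict_right_mono) auto
    then have "cmod (u 0) * c \<ge> 1" using cpos by simp
    then show "u \<in> E" using u unfolding E_def by simp
  qed
  obtain W where W: "\<And>x. w x \<le> W" using wbdd by (auto simp: bdd_above_def)
  have zLp: "(\<lambda>_. 0 :: complex) \<in> Lp M p" unfolding Lp_def using p0 by (simp add: meas_all[OF sM])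
  have sub: "E \<subseteq> non_hypercyclic_vectors (Lp M p) (Lp_dist M p) (\<lambda>n. wtrans a w ^^ \<gamma> n)"
  proof
    fix f assume fE: "f \<in> E"
    then have fLp: "f \<in> Lp M p" and fc: "cmod (f 0) * c \<ge> 1" unfolding E_def by auto
    have "Lp_dist M p ((wtrans a w ^^ \<gamma> n) f) (\<lambda>_. 0) \<ge> 1" for n
    proof -
      define P where "P = (\<Prod>k\<in>{1..\<gamma> n}. w (gpow k a))"
      have Ppos: "P > 0" unfolding P_def using wpos by (intro prod_pos) auto
      have "c \<le> P" unfolding c_def P_def
        by (rule cINF_lower) (auto intro!: bdd_belowI[of _ 0] prod_pos wpos less_imp_le)
      have TLp: "(wtrans a w ^^ \<gamma> n) f \<in> Lp M p" by (rule iter_Lp[OF haar p wpos W fLp])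
      have "cmod ((wtrans a w ^^ \<gamma> n) f (gpow (\<gamma> n) a) - 0) \<le> Lp_dist M p ((wtrans a w ^^ \<gamma> n) f) (\<lambda>_. 0)"
        by (rule dist_ge[OF haar e1 p fin_diff[OF haar p TLp zLp]])
      moreover have "cmod ((wtrans a w ^^ \<gamma> n) f (gpow (\<gamma> n) a) - 0) = P * cmod (f 0)"
        using Ppos unfolding iter_val P_def[symmetric] by (simp add: norm_mult)
      moreover have "P * cmod (f 0) \<ge> c * cmod (f 0)" using \<open>c \<le> P\<close> by (simp add: mult_right_mono)
      ultimately show ?thesis using fc by (simp add: mult.commute)
    qed
    then have "\<not> hypercyclic_vector (Lp M p) (Lp_dist M p) (\<lambda>n. wtrans a w ^^ \<gamma> n) f"
      unfolding hypercyclic_vector_def using zLp by (metis not_less zero_less_one)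
    then show "f \<in> non_hypercyclic_vectors (Lp M p) (Lp_dist M p) (\<lambda>n. wtrans a w ^^ \<gamma> n)"
      unfolding non_hypercyclic_vectors_def using fLp by simp
  qed
  show ?thesis
    using notE sigma_porous_subset[OF sub] unfolding E_def by blast
qed

end
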